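(* If an affine bijection $\sigma:\mathcal{G}_N\to\mathcal{G}_N$ satisfies $\sigma(A_0)=A_0$, then $\sigma(\mathcal{I}_k)=\mathcal{I}_k$ for all $k=1,\ldots,\lfloor N/2\rfloor$.
   Context: $\mathcal{G}_N$ is the set of real symmetric positive semi-definite $N\times N$ matrices with unit diagonal. For $\mathcal K\subseteq\{1,\ldots,N\}$, $A_{\mathcal K}=\mathbf{s}\mathbf{s}^\top$ where $s_\mu=-1$ for $\mu\in\mathcal K$ and $s_\mu=+1$ otherwise; $A_0$ is the all-ones matrix; $\mathcal{I}_k=\{A_{\mathcal K}:|\mathcal K|=k\}$. *)

theory Defs
  imports "HOL-Analysis.Analysis"
begin

text \<open>Real symmetric positive semi-definite matrices, indexed by a finite type 'n
  (so N = CARD('n)).\<close>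
definition psd_matrix :: "real^'n^'n \<Rightarrow> bool" where
  "psd_matrix A \<longleftrightarrow> transpose A = A \<and> (\<forall>x::real^'n. 0 \<le> x \<bullet> (A *v x))"

definition elliptope :: "(real^'n^'n) set" where
  "elliptope = {A. psd_matrix A \<and> (\<forall>i. A $ i $ i = 1)}"

definition sign_vec :: "'n set \<Rightarrow> real^'n" where
  "sign_vec K = (\<chi> i. if i \<in> K then -1 else 1)"

definition cut_matrix :: "'n set \<Rightarrow> real^'n^'n" where
  "cut_matrix K = (\<chi> i j. sign_vec K $ i * sign_vec K $ j)"

definition ones_matrix :: "real^'n^'n" where
  "ones_matrix = (\<chi> i j. 1)"

definition cut_class :: "nat \<Rightarrow> (real^'n^'n) set" where
  "cut_class k = {cut_matrix K | K. card K = k}"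

definition affine_on :: "('a::real_vector) set \<Rightarrow> ('a \<Rightarrow> 'b::real_vector) \<Rightarrow> bool" where
  "affine_on S f \<longleftrightarrow> (\<forall>x\<in>S. \<forall>y\<in>S. \<forall>t::real. 0 \<le> t \<and> t \<le> 1 \<longrightarrow>
      f ((1 - t) *\<^sub>R x + t *\<^sub>R y) = (1 - t) *\<^sub>R f x + t *\<^sub>R f y)"

end

theory Submission
  imports Defs
begin

lemma inner_mv: "(x::real^'n) \<bullet> (A *v x) = (\<Sum>i\<in>UNIV. \<Sum>j\<in>UNIV. x$i * A$i$j * x$j)"
  by (simp add: inner_vec_def matrix_vector_mult_def sum_distrib_left mult.assoc)

lemma sv_cases: "sign_vec K $ i = 1 \<or> sign_vec K $ i = -1"
  by (simp add: sign_vec_def)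
lemma sv_sq[simp]: "sign_vec K $ i * sign_vec K $ i = 1"
  by (simp add: sign_vec_def)
lemma cut_entry[simp]: "cut_matrix K $ i $ j = sign_vec K $ i * sign_vec K $ j"
  by (simp add: cut_matrix_def)

lemma qf_rank1: fixes x s :: "real^'n" shows "x \<bullet> ((\<chi> i j. s$i * s$j) *v x) = (s \<bullet> x)^2"
  unfolding inner_mv by (simp add: inner_vec_def power2_eq_square sum_product ac_simps)

lemma cut_qf: "x \<bullet> (cut_matrix K *v x) = (sign_vec K \<bullet> x)^2"
  using qf_rank1[of x "sign_vec K"] by (simp add: cut_matrix_def)

lemma sym_entry: "transpose A = A \<Longrightarrow> A$j$i = A$i$j"
  by (metis transpose_def vec_lambda_beta)

lemma cut_in: "cut_matrix K \<in> elliptope"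
  by (simp add: elliptope_def psd_matrix_def cut_qf vec_eq_iff transpose_def mult.commute)

lemma ones_cut: "ones_matrix = cut_matrix {}"
  by (simp add: vec_eq_iff ones_matrix_def sign_vec_def)

lemma qf_lin: fixes x :: "real^'n" shows "x \<bullet> ((a *\<^sub>R A + b *\<^sub>R B) *v x) = a * (x \<bullet> (A *v x)) + b * (x \<bullet> (B *v x))"
  unfolding inner_mv by (simp add: sum_distrib_left sum.distrib algebra_simps)

lemma psd_comb: "psd_matrix A \<Longrightarrow> psd_matrix B \<Longrightarrow> 0 \<le> a \<Longrightarrow> 0 \<le> b \<Longrightarrow> psd_matrix (a *\<^sub>R A + b *\<^sub>R B)"
  unfolding psd_matrix_def qf_lin
  by (auto simp: vec_eq_iff transpose_def)

lemma G_comb: "A \<in> elliptope \<Longrightarrow> B \<in> elliptope \<Longrightarrow> 0 \<le> t \<Longrightarrow> t \<le> 1 \<Longrightarrow> (1-t) *\<^sub>R A + t *\<^sub>R B \<in> elliptope"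
  unfolding elliptope_def using psd_comb[of A B "1-t" t] by (auto simp: algebra_simps)

lemma G_convex: "convex (elliptope :: (real^'n^'n) set)"
  unfolding convex_alt using G_comb by blast

lemma affD:
  assumes "affine_on S f" "x \<in> S" "y \<in> S" "0 \<le> t" "t \<le> 1"
  shows "f ((1 - t) *\<^sub>R x + t *\<^sub>R y) = (1 - t) *\<^sub>R f x + t *\<^sub>R f y"
  using assms unfolding affine_on_def by blast

lemma aff_inv:
  assumes "bij_betw f S S" "affine_on S f" "convex S"
  shows "affine_on S (inv_into S f)"
  unfolding affine_on_def
proof (intro ballI allI impI)
  fix x y and t :: real assume x: "x \<in> S" and y: "y \<in> S" and t: "0 \<le> t \<and> t \<le> 1"
  have x': "inv_into S f x \<in> S" "f (inv_into S f x) = x"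
    using x assms(1) by (auto simp: bij_betw_def inv_into_into f_inv_into_f)
  have y': "inv_into S f y \<in> S" "f (inv_into S f y) = y"
    using y assms(1) by (auto simp: bij_betw_def inv_into_into f_inv_into_f)
  define p where "p = (1 - t) *\<^sub>R inv_into S f x + t *\<^sub>R inv_into S f y"
  have pS: "p \<in> S" using assms(3) x' y' t unfolding p_def convex_alt by blast
  have "f p = (1 - t) *\<^sub>R x + t *\<^sub>R y"
    using assms(2) x'(1) y'(1) t unfolding affine_on_def p_def by (simp add: x'(2) y'(2))
  hence "inv_into S f ((1 - t) *\<^sub>R x + t *\<^sub>R y) = p"
    using pS assms(1) by (metis bij_betw_def inv_into_f_f)
  thus "inv_into S f ((1 - t) *\<^sub>R x + t *\<^sub>R y) = (1 - t) *\<^sub>R inv_into S f x + t *\<^sub>R inv_into S f y"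
    by (simp add: p_def)
qed

lemma aff_comp:
  assumes "affine_on S f" "affine_on S g" "g ` S \<subseteq> S" "convex S"
  shows "affine_on S (f \<circ> g)"
  unfolding affine_on_def
proof (intro ballI allI impI)
  fix x y and t :: real assume x: "x \<in> S" and y: "y \<in> S" and t: "0 \<le> t \<and> t \<le> 1"
  have "g ((1 - t) *\<^sub>R x + t *\<^sub>R y) = (1 - t) *\<^sub>R g x + t *\<^sub>R g y"
    using assms(2) x y t unfolding affine_on_def by blast
  moreover have "g x \<in> S" "g y \<in> S" using assms(3) x y by auto
  ultimately show "(f \<circ> g) ((1 - t) *\<^sub>R x + t *\<^sub>R y) = (1 - t) *\<^sub>R (f \<circ> g) x + t *\<^sub>R (f \<circ> g) y"
    using assms(1) t unfolding affine_on_def by simp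
qed

lemma aff_convex_on:
  fixes g :: "'a::real_vector \<Rightarrow> real"
  assumes "affine_on S g" "convex S"
  shows "convex_on S g" "convex_on S (\<lambda>x. - g x)"
proof -
  have key: "g (u *\<^sub>R x + v *\<^sub>R y) = u * g x + v * g y"
    if "x \<in> S" "y \<in> S" "0 \<le> u" "0 \<le> v" "u + v = 1" for x y u v
  proof -
    have "g ((1 - v) *\<^sub>R x + v *\<^sub>R y) = (1 - v) *\<^sub>R g x + v *\<^sub>R g y"
      using assms(1) that unfolding affine_on_def by auto
    moreover have "u = 1 - v" using that by simp
    ultimately show ?thesis by simp
  qed
  show "convex_on S g" unfolding convex_on_def using assms(2) key by simp
  show "convex_on S (\<lambda>x. - g x)" unfolding convex_on_def using assms(2) key by simp
qed

lemma aff_sum: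
  fixes g :: "'a::real_vector \<Rightarrow> real"
  assumes "affine_on S g" "convex S" "finite I" "I \<noteq> {}" "sum a I = 1"
    "\<And>i. i \<in> I \<Longrightarrow> a i \<ge> 0" "\<And>i. i \<in> I \<Longrightarrow> y i \<in> S"
  shows "g (\<Sum>i\<in>I. a i *\<^sub>R y i) = (\<Sum>i\<in>I. a i * g (y i))"
proof -
  have "g (\<Sum>i\<in>I. a i *\<^sub>R y i) \<le> (\<Sum>i\<in>I. a i * g (y i))"
    by (rule convex_on_sum[OF assms(3,4) aff_convex_on(1)[OF assms(1,2)] assms(5,6,7)])
  moreover have "- g (\<Sum>i\<in>I. a i *\<^sub>R y i) \<le> (\<Sum>i\<in>I. a i * - g (y i))"
    by (rule convex_on_sum[OF assms(3,4) aff_convex_on(2)[OF assms(1,2)] assms(5,6,7)])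
  ultimately show ?thesis by (simp add: sum_negf)
qed

lemma aff3:
  assumes "affine_on S f" "convex S" "x \<in> S" "y \<in> S" "z \<in> S"
  shows "f ((1/3) *\<^sub>R x + (1/3) *\<^sub>R y + (1/3) *\<^sub>R z) = (1/3) *\<^sub>R f x + (1/3) *\<^sub>R f y + (1/3) *\<^sub>R f z"
proof -
  have m: "(1 - 1/2) *\<^sub>R x + (1/2) *\<^sub>R y \<in> S"
    using convex_alt[THEN iffD1, OF assms(2), rule_format, of x y "1/2"] assms(3,4) by simp
  have e: "(1/3) *\<^sub>R x + (1/3) *\<^sub>R y + (1/3) *\<^sub>R z = (1 - 1/3) *\<^sub>R ((1 - 1/2) *\<^sub>R x + (1/2) *\<^sub>R y) + (1/3) *\<^sub>R z"
    by (simp add: algebra_simps)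
  have "f ((1 - 1/3) *\<^sub>R ((1 - 1/2) *\<^sub>R x + (1/2) *\<^sub>R y) + (1/3) *\<^sub>R z)
     = (1 - 1/3) *\<^sub>R f ((1 - 1/2) *\<^sub>R x + (1/2) *\<^sub>R y) + (1/3) *\<^sub>R f z"
    using affD[OF assms(1) m assms(5), of "1/3"] by simp
  also have "f ((1 - 1/2) *\<^sub>R x + (1/2) *\<^sub>R y) = (1 - 1/2) *\<^sub>R f x + (1/2) *\<^sub>R f y"
    using affD[OF assms(1) assms(3,4), of "1/2"] by simp
  finally show ?thesis unfolding e by (simp add: algebra_simps)
qed

lemma qf_supp:
  fixes x :: "real^'n"
  assumes "\<And>k. k \<notin> S \<Longrightarrow> x$k = 0"
  shows "x \<bullet> (A *v x) = (\<Sum>i\<in>S. \<Sum>j\<in>S. x$i * A$i$j * x$j)"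
proof -
  have "x \<bullet> (A *v x) = (\<Sum>i\<in>UNIV. \<Sum>j\<in>UNIV. x$i * A$i$j * x$j)" by (rule inner_mv)
  also have "\<dots> = (\<Sum>i\<in>S. \<Sum>j\<in>UNIV. x$i * A$i$j * x$j)"
    by (rule sum.mono_neutral_right) (auto simp: assms)
  also have "\<dots> = (\<Sum>i\<in>S. \<Sum>j\<in>S. x$i * A$i$j * x$j)"
    by (rule sum.cong[OF refl], rule sum.mono_neutral_right) (auto simp: assms)
  finally show ?thesis .
qed

lemma inner_supp:
  fixes x s :: "real^'n"
  assumes "\<And>k. k \<notin> S \<Longrightarrow> x$k = 0"
  shows "s \<bullet> x = (\<Sum>i\<in>S. s$i * x$i)"
  unfolding inner_vec_def inner_real_def by (rule sum.mono_neutral_right) (auto simp: assms)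

lemma G_sym: "X \<in> elliptope \<Longrightarrow> X$j$i = X$i$j"
  by (auto simp: elliptope_def psd_matrix_def intro: sym_entry)
lemma G_diag: "X \<in> elliptope \<Longrightarrow> X$i$i = 1"
  by (auto simp: elliptope_def)
lemma G_psd: "X \<in> elliptope \<Longrightarrow> 0 \<le> x \<bullet> (X *v x)"
  by (auto simp: elliptope_def psd_matrix_def)

lemma G_bound: fixes X :: "real^'n^'n" assumes "X \<in> elliptope" shows "\<bar>X$i$j\<bar> \<le> 1"
proof (cases "i = j")
  case True thus ?thesis using G_diag[OF assms] by simp
next
  case False
  have "0 \<le> 2 + 2 * e * X$i$j" if "e = 1 \<or> e = -1" for e :: real
  proof -
    define x :: "real^'n" where "x = (\<chi> k. if k = i then 1 else if k = j then e else 0)"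
    have "x \<bullet> (X *v x) = (\<Sum>a\<in>{i,j}. \<Sum>b\<in>{i,j}. x$a * X$a$b * x$b)"
      by (rule qf_supp) (auto simp: x_def)
    also have "\<dots> = 2 + 2 * e * X$i$j"
      using False that G_diag[OF assms] G_sym[OF assms, of i j] by (auto simp: x_def)
    finally show ?thesis using G_psd[OF assms, of x] by simp
  qed
  from this[of 1] this[of "-1"] show ?thesis by auto
qed

lemma id_in: "(mat 1 :: real^'n^'n) \<in> elliptope"
proof -
  have "0 \<le> x \<bullet> ((mat 1 :: real^'n^'n) *v x)" for x :: "real^'n" by simp
  thus ?thesis by (simp add: elliptope_def psd_matrix_def mat_def transpose_def vec_eq_iff)
qed

definition Em :: "'n \<Rightarrow> 'n \<Rightarrow> real^'n^'n" where
  "Em i j = (\<chi> k l. if i \<noteq> j \<and> ((k = i \<and> l = j) \<or> (k = j \<and> l = i)) then 1 else 0)"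

lemma Em_mv: "Em i j *v x = (\<chi> k. if i \<noteq> j then (if k = i then x$j else if k = j then x$i else 0) else 0)"
proof -
  have "(Em i j *v x)$k = (if i \<noteq> j then (if k = i then x$j else if k = j then x$i else 0) else 0)" for k
  proof (cases "i = j")
    case True thus ?thesis by (simp add: Em_def matrix_vector_mult_def)
  next
    case False
    show ?thesis
    proof (cases "k = i")
      case True
      have "(\<Sum>l\<in>UNIV. Em i j $ k $ l * x $ l) = (\<Sum>l\<in>UNIV. if l = j then x$l else 0)"
        by (rule sum.cong) (use True False in \<open>auto simp: Em_def\<close>)
      thus ?thesis using True False by (simp add: matrix_vector_mult_def)
    next
      case k: False
      show ?thesis
      proof (cases "k = j")
        case True
        have "(\<Sum>l\<in>UNIV. Em i j $ k $ l * x $ l) = (\<Sum>l\<in>UNIV. if l = i then x$l else 0)"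
          by (rule sum.cong) (use True False in \<open>auto simp: Em_def\<close>)
        thus ?thesis using True False k by (simp add: matrix_vector_mult_def)
      next
        case kj: False
        have "(\<Sum>l\<in>UNIV. Em i j $ k $ l * x $ l) = 0"
          by (rule sum.neutral) (use kj k False in \<open>auto simp: Em_def\<close>)
        thus ?thesis using kj False k by (simp add: matrix_vector_mult_def)
      qed
    qed
  qed
  thus ?thesis by (simp add: vec_eq_iff)
qed

lemma Em_qf: "(x::real^'n) \<bullet> (Em i j *v x) = (if i \<noteq> j then 2 * x$i * x$j else 0)"
proof (cases "i = j")
  case True thus ?thesis by (simp add: Em_mv inner_vec_def)
next
  case False
  have "x \<bullet> (Em i j *v x) = (\<Sum>k\<in>{i,j}. x$k * (Em i j *v x)$k)"
    by (rule inner_supp) (auto simp: Em_mv)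
  thus ?thesis using False by (simp add: Em_mv)
qed

lemma smv: fixes A :: "real^'n^'m" shows "(c *\<^sub>R A) *v x = c *\<^sub>R (A *v x)"
  by (simp add: vec_eq_iff matrix_vector_mult_def sum_distrib_left ac_simps)

lemma two_ab: "2 * \<bar>a * b\<bar> \<le> a * a + b * (b::real)"
proof -
  have "0 \<le> (\<bar>a\<bar> - \<bar>b\<bar>)^2" by simp
  thus ?thesis by (simp add: power2_eq_square algebra_simps abs_mult)
qed

lemma idE_in: fixes i j :: "'n::finite" assumes "\<bar>c\<bar> \<le> 1" shows "mat 1 + c *\<^sub>R Em i j \<in> elliptope"
proof -
  have sym: "transpose (mat 1 + c *\<^sub>R Em i j) = mat 1 + c *\<^sub>R Em i j"
    by (auto simp: vec_eq_iff transpose_def mat_def Em_def)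
  have "0 \<le> x \<bullet> ((mat 1 + c *\<^sub>R Em i j) *v x)" for x :: "real^'n"
  proof (cases "i = j")
    case True
    thus ?thesis by (simp add: matrix_vector_mult_add_rdistrib inner_add_right Em_qf smv)
  next
    case False
    have e: "x \<bullet> ((mat 1 + c *\<^sub>R Em i j) *v x) = x \<bullet> x + c * (2 * x$i * x$j)"
      using False by (simp add: matrix_vector_mult_add_rdistrib inner_add_right Em_qf smv)
    have "x$i * x$i + x$j * x$j \<le> x \<bullet> x"
    proof -
      have "x \<bullet> x = (\<Sum>k\<in>UNIV. x$k * x$k)" by (simp add: inner_vec_def)
      also have "\<dots> \<ge> (\<Sum>k\<in>{i,j}. x$k * x$k)"
        by (rule sum_mono2) auto
      finally show ?thesis using False by simp
    qed
    moreover have "0 \<le> x$i * x$i + x$j * x$j + c * (2 * x$i * x$j)"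
    proof -
      have "\<bar>c * (2 * x$i * x$j)\<bar> \<le> 2 * \<bar>x$i * x$j\<bar>"
        using assms by (simp add: abs_mult mult_left_le_one_le)
      moreover have "2 * \<bar>x$i * x$j\<bar> \<le> x$i * x$i + x$j * x$j"
        by (rule two_ab)
      ultimately show ?thesis by linarith
    qed
    ultimately show ?thesis unfolding e by linarith
  qed
  thus ?thesis using sym by (auto simp: elliptope_def psd_matrix_def mat_def Em_def)
qed

lemma Em_entry: "Em i j $ k $ l = (if k \<noteq> l \<and> ((i,j) = (k,l) \<or> (i,j) = (l,k)) then 1 else 0)"
  by (auto simp: Em_def)

lemma pair_sum:
  fixes f :: "'n::finite \<times> 'n \<Rightarrow> real"
  shows "(\<Sum>p\<in>UNIV. f p * Em (fst p) (snd p) $ k $ l) = (if k \<noteq> l then f (k,l) + f (l,k) else 0)"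
proof (cases "k = l")
  case True thus ?thesis by (simp add: Em_entry)
next
  case False
  have "(\<Sum>p\<in>UNIV. f p * Em (fst p) (snd p) $ k $ l)
      = (\<Sum>p\<in>UNIV. (if p = (k,l) then f p else 0) + (if p = (l,k) then f p else 0))"
    by (rule sum.cong) (use False in \<open>auto simp: Em_entry\<close>)
  also have "\<dots> = f (k,l) + f (l,k)" by (simp add: sum.distrib)
  finally show ?thesis using False by simp
qed

lemma repr:
  fixes g :: "real^'n^'n \<Rightarrow> real"
  assumes g: "affine_on elliptope g"
  shows "\<exists>a B. \<forall>Z\<in>elliptope. g Z = a + (\<Sum>i\<in>UNIV. \<Sum>j\<in>UNIV. B i j * Z$i$j)"
proof -
  let ?I = "mat 1 :: real^'n^'n"
  define c where "c i j = g (?I + Em i j) - g ?I" for i j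
  have step1: "g (?I + t *\<^sub>R Em i j) = g ?I + t * c i j" if t: "\<bar>t\<bar> \<le> 1" for t i j
  proof -
    let ?P = "?I + Em i j" and ?M = "?I + (-1) *\<^sub>R Em i j"
    have P: "?P \<in> elliptope" using idE_in[of 1 i j] by simp
    have M: "?M \<in> elliptope" using idE_in[of "-1" i j] by simp
    have e1: "?I = (1 - 1/2) *\<^sub>R ?M + (1/2) *\<^sub>R ?P" by (simp add: vec_eq_iff algebra_simps)
    have e2: "?I + t *\<^sub>R Em i j = (1 - (1+t)/2) *\<^sub>R ?M + ((1+t)/2) *\<^sub>R ?P"
      by (simp add: vec_eq_iff algebra_simps add_divide_distrib)
    have g1: "g ?I = (1 - 1/2) * g ?M + (1/2) * g ?P"
      using affD[OF g M P, of "1/2"] e1 by simp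
    have g2: "g (?I + t *\<^sub>R Em i j) = (1 - (1+t)/2) * g ?M + ((1+t)/2) * g ?P"
      using affD[OF g M P, of "(1+t)/2"] e2 t by simp
    show ?thesis using g1 g2 unfolding c_def by (simp add: algebra_simps) (simp add: field_simps)
  qed
  define m :: real where "m = real (card (UNIV :: ('n \<times> 'n) set))"
  have mpos: "m > 0" unfolding m_def by (simp add: card_gt_0_iff)
  have main: "g Z = g ?I + (\<Sum>p\<in>UNIV. (Z $ fst p $ snd p / 2) * c (fst p) (snd p))"
    if Z: "Z \<in> elliptope" for Z
  proof -
    define y where "y p = ?I + (Z $ fst p $ snd p / 2) *\<^sub>R Em (fst p) (snd p)" for p
    have yG: "y p \<in> elliptope" for p
      unfolding y_def by (rule idE_in) (use G_bound[OF Z, of "fst p" "snd p"] in auto)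
    have ident: "(1 - 1/m) *\<^sub>R ?I + (1/m) *\<^sub>R Z = (\<Sum>p\<in>UNIV. (1/m) *\<^sub>R y p)"
    proof -
      have "((1 - 1/m) *\<^sub>R ?I + (1/m) *\<^sub>R Z) $ k $ l = (\<Sum>p\<in>UNIV. (1/m) *\<^sub>R y p) $ k $ l" for k l
      proof -
        have "(\<Sum>p\<in>UNIV. (1/m) *\<^sub>R y p) $ k $ l = (\<Sum>p\<in>UNIV. (1/m) * (y p $ k $ l))"
          by (simp add: sum_component)
        also have "\<dots> = (\<Sum>p\<in>(UNIV::('n\<times>'n) set). (1/m) * (if k = l then 1 else 0))
             + (1/m) * (\<Sum>p\<in>UNIV. (Z $ fst p $ snd p / 2) * Em (fst p) (snd p) $ k $ l)"
          by (simp add: y_def mat_def sum.distrib sum_distrib_left algebra_simps)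
        also have "\<dots> = (if k = l then 1 else 0) + (1/m) * (if k \<noteq> l then Z$k$l/2 + Z$l$k/2 else 0)"
          by (subst pair_sum) (use mpos in \<open>simp add: m_def\<close>)
        also have "\<dots> = ((1 - 1/m) *\<^sub>R ?I + (1/m) *\<^sub>R Z) $ k $ l"
          using G_sym[OF Z, of k l] G_diag[OF Z, of k] mpos by (auto simp: mat_def field_simps)
        finally show ?thesis by simp
      qed
      thus ?thesis by (simp add: vec_eq_iff)
    qed
    have "g ((1 - 1/m) *\<^sub>R ?I + (1/m) *\<^sub>R Z) = (1 - 1/m) * g ?I + (1/m) * g Z"
    proof -
      have c1: "1 \<le> real CARD('n)" by (simp add: Suc_le_eq)
      have m1: "1 \<le> m" unfolding m_def using mult_mono[OF c1 c1] by simp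
      have a: "0 \<le> 1/m" "1/m \<le> 1" using mpos m1 by auto
      show ?thesis using affD[OF g id_in Z a] by simp
    qed
    moreover have "g (\<Sum>p\<in>UNIV. (1/m) *\<^sub>R y p) = (\<Sum>p\<in>UNIV. (1/m) * g (y p))"
      by (rule aff_sum[OF g G_convex]) (use mpos yG in \<open>auto simp: m_def\<close>)
    moreover have "(\<Sum>p\<in>UNIV. (1/m) * g (y p)) = g ?I + (1/m) * (\<Sum>p\<in>UNIV. (Z $ fst p $ snd p / 2) * c (fst p) (snd p))"
    proof -
      have "(\<Sum>p\<in>UNIV. (1/m) * g (y p)) = (\<Sum>p\<in>UNIV. (1/m) * g ?I + (1/m) * ((Z $ fst p $ snd p / 2) * c (fst p) (snd p)))"
      proof (rule sum.cong[OF refl])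
        fix p :: "'n \<times> 'n"
        have "\<bar>Z $ fst p $ snd p / 2\<bar> \<le> 1" using G_bound[OF Z, of "fst p" "snd p"] by auto
        from step1[OF this] show "(1/m) * g (y p) = (1/m) * g ?I + (1/m) * ((Z $ fst p $ snd p / 2) * c (fst p) (snd p))"
          by (simp add: y_def algebra_simps)
      qed
      also have "\<dots> = g ?I + (1/m) * (\<Sum>p\<in>UNIV. (Z $ fst p $ snd p / 2) * c (fst p) (snd p))"
        using mpos by (simp add: sum.distrib sum_distrib_left m_def)
      finally show ?thesis .
    qed
    ultimately have "(1 - 1/m) * g ?I + (1/m) * g Z = g ?I + (1/m) * (\<Sum>p\<in>UNIV. (Z $ fst p $ snd p / 2) * c (fst p) (snd p))"
      using ident by simp
    thus ?thesis using mpos by (simp add: field_simps)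
  qed
  show ?thesis
  proof (intro exI ballI)
    fix Z :: "real^'n^'n" assume Z: "Z \<in> elliptope"
    have "(\<Sum>p\<in>UNIV. (Z $ fst p $ snd p / 2) * c (fst p) (snd p))
        = (\<Sum>i\<in>UNIV. \<Sum>j\<in>UNIV. (c i j / 2) * Z$i$j)"
    proof -
      have "(\<Sum>i\<in>UNIV. \<Sum>j\<in>UNIV. (c i j / 2) * Z$i$j) = (\<Sum>(i,j)\<in>UNIV\<times>UNIV. (c i j / 2) * Z$i$j)"
        by (rule sum.cartesian_product)
      thus ?thesis by (simp add: case_prod_beta' ac_simps)
    qed
    thus "g Z = g ?I + (\<Sum>i\<in>UNIV. \<Sum>j\<in>UNIV. (c i j / 2) * Z$i$j)" using main[OF Z] by simp
  qed
qed

definition supp :: "(real^'n^'n \<Rightarrow> real) \<Rightarrow> real^'n^'n \<Rightarrow> bool" where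
  "supp g X \<longleftrightarrow> affine_on elliptope g \<and> (\<forall>Z\<in>elliptope. g Z \<le> g X)"

definition vert :: "real^'n^'n \<Rightarrow> bool" where
  "vert X \<longleftrightarrow> (\<forall>Y\<in>elliptope. \<forall>W\<in>elliptope. (\<forall>g. supp g X \<longrightarrow> g Y = g W) \<longrightarrow> Y = W)"

lemma vert_transfer:
  fixes \<tau> :: "real^'n^'n \<Rightarrow> real^'n^'n"
  assumes bij: "bij_betw \<tau> elliptope elliptope" and aff: "affine_on elliptope \<tau>"
    and X: "X \<in> elliptope" and v: "vert X"
  shows "vert (\<tau> X)"
  unfolding vert_def
proof (intro ballI impI)
  fix Y' W' assume Y': "Y' \<in> elliptope" and W': "W' \<in> elliptope"
    and h: "\<forall>g. supp g (\<tau> X) \<longrightarrow> g Y' = g W'"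
  let ?\<iota> = "inv_into elliptope \<tau>"
  have iaff: "affine_on elliptope ?\<iota>" by (rule aff_inv[OF bij aff G_convex])
  have iG: "?\<iota> Z \<in> elliptope" if "Z \<in> elliptope" for Z
    using that bij by (metis bij_betw_def inv_into_into)
  have it: "\<tau> (?\<iota> Z) = Z" if "Z \<in> elliptope" for Z
    using that bij by (metis bij_betw_def f_inv_into_f)
  have ti: "?\<iota> (\<tau> Z) = Z" if "Z \<in> elliptope" for Z
    using that bij by (metis bij_betw_def inv_into_f_f)
  have "?\<iota> Y' = ?\<iota> W'"
    using v unfolding vert_def
  proof (elim ballE impE allE)
    show "\<forall>g. supp g X \<longrightarrow> g (?\<iota> Y') = g (?\<iota> W')"
    proof (intro allI impI)
      fix g assume sg: "supp g X"
      have "supp (g \<circ> ?\<iota>) (\<tau> X)"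
        unfolding supp_def
      proof
        show "affine_on elliptope (g \<circ> ?\<iota>)"
          by (rule aff_comp) (use sg iaff iG G_convex in \<open>auto simp: supp_def\<close>)
        show "\<forall>Z\<in>elliptope. (g \<circ> ?\<iota>) Z \<le> (g \<circ> ?\<iota>) (\<tau> X)"
          using sg iG ti[OF X] by (auto simp: supp_def)
      qed
      thus "g (?\<iota> Y') = g (?\<iota> W')" using h by auto
    qed
  qed (use iG Y' W' in auto)
  thus "Y' = W'" using it Y' W' by metis
qed

lemma cut_vert: "vert (cut_matrix K :: real^'n^'n)"
  unfolding vert_def
proof (intro ballI impI)
  fix Y W :: "real^'n^'n" assume Y: "Y \<in> elliptope" and W: "W \<in> elliptope"
    and h: "\<forall>g. supp g (cut_matrix K) \<longrightarrow> g Y = g W"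
  let ?s = "sign_vec K"
  have "Y$p$q = W$p$q" for p q
  proof -
    define g where "g Z = ?s$p * ?s$q * Z$p$q" for Z :: "real^'n^'n"
    have "supp g (cut_matrix K)"
      unfolding supp_def
    proof
      show "affine_on elliptope g" unfolding affine_on_def g_def by (simp add: algebra_simps)
      show "\<forall>Z\<in>elliptope. g Z \<le> g (cut_matrix K)"
      proof
        fix Z :: "real^'n^'n" assume "Z \<in> elliptope"
        hence "\<bar>Z$p$q\<bar> \<le> 1" by (rule G_bound)
        hence "?s$p * ?s$q * Z$p$q \<le> 1"
          using sv_cases[of K p] sv_cases[of K q] by auto
        moreover have "g (cut_matrix K) = 1"
          unfolding g_def using sv_sq[of K p] sv_sq[of K q] by (simp add: algebra_simps)
        ultimately show "g Z \<le> g (cut_matrix K)" unfolding g_def by simp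
      qed
    qed
    hence "g Y = g W" using h by auto
    moreover have "?s$p * ?s$q \<noteq> 0" using sv_cases[of K p] sv_cases[of K q] by auto
    ultimately show ?thesis unfolding g_def by simp
  qed
  thus "Y = W" by (simp add: vec_eq_iff)
qed

lemma pm_cut:
  fixes X :: "real^'n^'n"
  assumes X: "X \<in> elliptope" and pm: "\<And>p q. \<bar>X$p$q\<bar> = 1"
  shows "X \<in> range cut_matrix"
proof -
  obtain i0 :: 'n where True by simp
  let ?u = "\<lambda>i. X$i0$i"
  have u: "?u i = 1 \<or> ?u i = -1" for i using pm[of i0 i] by auto
  have key: "X$i$j = ?u i * ?u j" for i j
  proof -
    consider "i = j" | "i = i0" | "j = i0" | "i \<noteq> j" "i \<noteq> i0" "j \<noteq> i0" by blast
    thus ?thesis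
    proof cases
      case 1 thus ?thesis using u[of i] G_diag[OF X, of i] by auto
    next
      case 2 thus ?thesis using G_diag[OF X, of i0] by simp
    next
      case 3 thus ?thesis using G_diag[OF X, of i0] G_sym[OF X, of i i0] by simp
    next
      case 4
      define x :: "real^'n" where "x = (\<chi> k. if k = i0 then 1 else if k = i then - ?u i else if k = j then - ?u j else 0)"
      have "x \<bullet> (X *v x) = (\<Sum>a\<in>{i0,i,j}. \<Sum>b\<in>{i0,i,j}. x$a * X$a$b * x$b)"
        by (rule qf_supp) (auto simp: x_def)
      also have "\<dots> = 2 * (?u i * ?u j * X$i$j) - 1"
      proof -
        have si: "?u i * ?u i = 1" and sj: "?u j * ?u j = 1" using u[of i] u[of j] by auto
        show ?thesis
          using 4 G_diag[OF X] G_sym[OF X, of i i0] G_sym[OF X, of j i0] G_sym[OF X, of i j]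
          by (simp add: x_def) (simp add: algebra_simps si sj)
      qed
      finally have ineq: "0 \<le> 2 * (?u i * ?u j * X$i$j) - 1"
        using G_psd[OF X, of x] by simp
      have w: "X$i$j = 1 \<or> X$i$j = -1" using pm[of i j] by auto
      show ?thesis using u[of i] u[of j] w ineq by (elim disjE) simp_all
    qed
  qed
  have sv: "sign_vec {i. ?u i = -1} $ i = ?u i" for i
    using u[of i] by (auto simp: sign_vec_def)
  have "X = cut_matrix {i. ?u i = -1}"
    unfolding vec_eq_iff cut_entry sv using key by blast
  thus ?thesis by blast
qed

lemma dq: fixes u v c :: real
  shows "((\<lambda>t. (u + t * v) / sqrt (1 + 2*t*c + t^2)) has_real_derivative (v - u*c)) (at 0)"
proof -
  have "((\<lambda>t. (u + t * v) / sqrt (1 + 2*t*c + t^2)) has_real_derivative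
      ((v * sqrt (1 + 2*0*c + 0^2) - (u + 0 * v) * ((2*c + 2*0) / (2 * sqrt (1 + 2*0*c + 0^2)))) / (sqrt (1 + 2*0*c + 0^2))^2)) (at 0)"
    by (rule derivative_eq_intros refl | simp)+
  thus ?thesis by simp
qed

lemma D_qf_bound:
  fixes D :: "real^'n^'n" and x :: "real^'n"
  assumes "\<And>k l. \<bar>D$k$l\<bar> \<le> 2"
  shows "- (2 * real CARD('n)) * (x \<bullet> x) \<le> x \<bullet> (D *v x)"
proof -
  have t: "- (x$k * x$k + x$l * x$l) \<le> x$k * D$k$l * x$l" for k l
  proof -
    have "\<bar>x$k * D$k$l * x$l\<bar> = \<bar>D$k$l\<bar> * \<bar>x$k * x$l\<bar>" by (simp add: abs_mult)
    also have "\<dots> \<le> 2 * \<bar>x$k * x$l\<bar>" by (rule mult_right_mono) (use assms in auto)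
    also have "\<dots> \<le> x$k * x$k + x$l * x$l" by (rule two_ab)
    finally show ?thesis by linarith
  qed
  have "(\<Sum>k\<in>UNIV. \<Sum>l\<in>UNIV. - (x$k * x$k + x$l * x$l)) \<le> (\<Sum>k\<in>UNIV. \<Sum>l\<in>UNIV. x$k * D$k$l * x$l)"
    by (intro sum_mono t)
  moreover have "(\<Sum>k\<in>UNIV. \<Sum>l\<in>UNIV. - (x$k * x$k + x$l * x$l)) = - (2 * real CARD('n)) * (x \<bullet> x)"
  proof -
    let ?S = "\<Sum>i\<in>UNIV. x$i * x$i"
    have "(\<Sum>k\<in>UNIV. \<Sum>l\<in>UNIV. (x$k * x$k + x$l * x$l)) = (\<Sum>k\<in>UNIV. real CARD('n) * (x$k * x$k) + ?S)"
      by (simp add: sum.distrib)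
    also have "\<dots> = real CARD('n) * ?S + real CARD('n) * ?S"
      by (simp add: sum.distrib sum_distrib_left)
    finally have "(\<Sum>k\<in>UNIV. \<Sum>l\<in>UNIV. (x$k * x$k + x$l * x$l)) = 2 * real CARD('n) * (x \<bullet> x)"
      by (simp add: inner_vec_def)
    thus ?thesis by (simp only: sum_negf)
  qed
  ultimately show ?thesis by (simp add: inner_mv)
qed

context
  fixes X :: "real^'n^'n" and p q :: 'n
  assumes X: "X \<in> elliptope" and pq: "p \<noteq> q" and cb: "\<bar>X$p$q\<bar> < 1"
begin

definition "cc = X$p$q"
definition "rr t = sqrt (1 + 2*t*cc + t^2)"
definition "MM t = (\<chi> k a. if k = p then ((if a = p then 1 else 0) + (if a = q then t else 0)) / rr t
                          else (if a = k then 1 else (0::real)))"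
definition "ZZ t = (\<chi> k l. if k = p \<and> l = p then 1 else if k = p then (X$p$l + t * X$q$l) / rr t
     else if l = p then (X$k$p + t * X$k$q) / rr t else X$k$l)"

lemma rr_sq: "(rr t)^2 = 1 + 2*t*cc + t^2" and rr_pos: "rr t > 0"
proof -
  have "\<bar>cc\<bar> < 1" using cb by (simp add: cc_def)
  hence "cc * cc < 1" by (metis abs_mult_less abs_mult_self_eq abs_one mult_1_right)
  moreover have "1 + 2*t*cc + t^2 = (t + cc)^2 + (1 - cc*cc)" by (simp add: power2_eq_square algebra_simps)
  ultimately have pos: "1 + 2*t*cc + t^2 > 0" by (smt (verit) zero_le_power2)
  thus "(rr t)^2 = 1 + 2*t*cc + t^2" unfolding rr_def by simp
  show "rr t > 0" unfolding rr_def using pos by simp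
qed

lemma rowsum: "(\<Sum>a\<in>UNIV. MM t $ k $ a * f a) = (if k = p then (f p + t * f q) / rr t else f k)"
proof (cases "k = p")
  case True
  have "(\<Sum>a\<in>UNIV. MM t $ k $ a * f a) = (\<Sum>a\<in>UNIV. (if a = p then f a / rr t else 0) + (if a = q then t * f a / rr t else 0))"
    by (rule sum.cong) (use True pq in \<open>auto simp: MM_def add_divide_distrib\<close>)
  also have "\<dots> = (f p + t * f q) / rr t" by (simp add: sum.distrib add_divide_distrib)
  finally show ?thesis using True by simp
next
  case False
  have "(\<Sum>a\<in>UNIV. MM t $ k $ a * f a) = (\<Sum>a\<in>UNIV. if a = k then f a else 0)"
    by (rule sum.cong) (use False in \<open>auto simp: MM_def\<close>)
  thus ?thesis using False by simp
qed

lemma ZZ_eq: "ZZ t = (MM t ** X) ** transpose (MM t)"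
proof -
  have MX: "(MM t ** X) $ k $ b = (if k = p then (X$p$b + t * X$q$b) / rr t else X$k$b)" for k b
    unfolding matrix_matrix_mult_def by (simp add: rowsum)
  have "((MM t ** X) ** transpose (MM t)) $ k $ l = (\<Sum>b\<in>UNIV. MM t $ l $ b * (MM t ** X) $ k $ b)" for k l
    unfolding matrix_matrix_mult_def by (simp add: transpose_def mult.commute)
  hence E: "((MM t ** X) ** transpose (MM t)) $ k $ l
     = (if l = p then ((MM t ** X) $ k $ p + t * (MM t ** X) $ k $ q) / rr t else (MM t ** X) $ k $ l)" for k l
    by (simp add: rowsum)
  have "ZZ t $ k $ l = ((MM t ** X) ** transpose (MM t)) $ k $ l" for k l
  proof -
    have sym: "X$q$p = X$p$q" using G_sym[OF X] by simp
    have d: "X$p$p = 1" "X$q$q = 1" using G_diag[OF X] by auto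
    have rne: "rr t \<noteq> 0" using rr_pos[of t] by simp
    consider "k = p \<and> l = p" | "k = p \<and> l \<noteq> p" | "k \<noteq> p \<and> l = p" | "k \<noteq> p \<and> l \<noteq> p" by blast
    thus ?thesis
    proof cases
      case 1
      have "((X$p$p + t * X$q$p) / rr t + t * ((X$p$q + t * X$q$q) / rr t)) / rr t
           = (1 + 2*t*cc + t^2) / (rr t)^2"
        using d sym rne by (simp add: cc_def field_simps power2_eq_square)
      also have "\<dots> = (rr t)^2 / (rr t)^2" by (simp only: rr_sq)
      also have "\<dots> = 1" using rr_pos[of t] by simp
      finally show ?thesis using 1 pq by (simp add: E MX ZZ_def)
    next
      case 2 thus ?thesis by (simp add: E MX ZZ_def)
    next
      case 3 thus ?thesis using pq by (simp add: E MX ZZ_def add_divide_distrib)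
    next
      case 4 thus ?thesis by (simp add: E MX ZZ_def)
    qed
  qed
  thus ?thesis by (simp add: vec_eq_iff)
qed

lemma ZZ_in: "ZZ t \<in> elliptope"
proof -
  have sym: "transpose (ZZ t) = ZZ t"
    using G_sym[OF X] by (auto simp: vec_eq_iff transpose_def ZZ_def)
  have psd: "0 \<le> x \<bullet> (ZZ t *v x)" for x
  proof -
    let ?y = "transpose (MM t) *v x"
    have "ZZ t *v x = MM t *v (X *v ?y)"
      by (simp only: ZZ_eq matrix_vector_mul_assoc matrix_mul_assoc)
    hence "x \<bullet> (ZZ t *v x) = (x v* MM t) \<bullet> (X *v ?y)" by (simp add: dot_lmul_matrix)
    also have "\<dots> = ?y \<bullet> (X *v ?y)" by (simp add: transpose_matrix_vector)
    finally show ?thesis using G_psd[OF X] by simp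
  qed
  have diag: "ZZ t $ i $ i = 1" for i using G_diag[OF X] by (simp add: ZZ_def)
  show ?thesis unfolding elliptope_def psd_matrix_def using sym psd diag by blast
qed

lemma ZZ_0: "ZZ 0 = X"
proof -
  have "rr 0 = 1" by (simp add: rr_def)
  thus ?thesis using G_diag[OF X] by (auto simp: vec_eq_iff ZZ_def)
qed

definition "DD = (\<chi> k l. if k = p \<and> l = p then 0 else if k = p then X$q$l - X$p$l * cc
     else if l = p then X$k$q - X$k$p * cc else 0)"

lemma ZZ_deriv: "((\<lambda>t. ZZ t $ k $ l) has_real_derivative DD $ k $ l) (at 0)"
proof -
  consider "k = p \<and> l = p" | "k = p \<and> l \<noteq> p" | "k \<noteq> p \<and> l = p" | "k \<noteq> p \<and> l \<noteq> p" by blast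
  thus ?thesis
  proof cases
    case 1 thus ?thesis by (simp add: ZZ_def DD_def)
  next
    case 2 thus ?thesis using dq[of "X$p$l" "X$q$l" cc] by (simp add: ZZ_def DD_def rr_def)
  next
    case 3 thus ?thesis using dq[of "X$k$p" "X$k$q" cc] by (simp add: ZZ_def DD_def rr_def)
  next
    case 4 thus ?thesis by (simp add: ZZ_def DD_def)
  qed
qed

lemma not_vert: "\<not> vert X"
proof
  assume v: "vert X"
  define eps :: real where "eps = 1 / (2 * real CARD('n))"
  have epos: "eps > 0" by (simp add: eps_def)
  define Y where "Y = mat 1 + eps *\<^sub>R DD"
  have Dsym: "DD $ l $ k = DD $ k $ l" for k l
    using G_sym[OF X] by (auto simp: DD_def)
  have Db: "\<bar>DD$k$l\<bar> \<le> 2" for k l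
  proof -
    have "\<bar>cc\<bar> \<le> 1" using cb by (simp add: cc_def)
    have "\<bar>X$a$b - X$c$d * cc\<bar> \<le> 2" for a b c d
    proof -
      have "\<bar>X$c$d * cc\<bar> \<le> 1" using G_bound[OF X, of c d] \<open>\<bar>cc\<bar> \<le> 1\<close>
        by (simp add: abs_mult mult_le_one)
      thus ?thesis using G_bound[OF X, of a b] by linarith
    qed
    thus ?thesis by (auto simp: DD_def)
  qed
  have YG: "Y \<in> elliptope"
  proof -
    have sym: "transpose Y = Y" using Dsym by (auto simp: vec_eq_iff transpose_def Y_def mat_def)
    have diag: "Y $ i $ i = 1" for i by (simp add: Y_def mat_def DD_def)
    have "0 \<le> x \<bullet> (Y *v x)" for x
    proof -
      have "x \<bullet> (Y *v x) = x \<bullet> x + eps * (x \<bullet> (DD *v x))"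
        by (simp add: Y_def matrix_vector_mult_add_rdistrib inner_add_right smv)
      moreover have "- (2 * real CARD('n)) * (x \<bullet> x) \<le> x \<bullet> (DD *v x)" by (rule D_qf_bound[OF Db])
      hence "eps * (- (2 * real CARD('n)) * (x \<bullet> x)) \<le> eps * (x \<bullet> (DD *v x))"
        by (rule mult_left_mono) (use epos in simp)
      moreover have "eps * (- (2 * real CARD('n)) * (x \<bullet> x)) = - (x \<bullet> x)" by (simp add: eps_def)
      ultimately show ?thesis by linarith
    qed
    thus ?thesis using sym diag by (simp add: elliptope_def psd_matrix_def)
  qed
  have agree: "g Y = g (mat 1)" if sg: "supp g X" for g
  proof -
    have ga: "affine_on elliptope g" and gmax: "\<forall>Z\<in>elliptope. g Z \<le> g X" using sg by (auto simp: supp_def)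
    obtain a B where rep: "\<forall>Z\<in>elliptope. g Z = a + (\<Sum>i\<in>UNIV. \<Sum>j\<in>UNIV. B i j * Z$i$j)"
      using repr[OF ga] by blast
    define h where "h t = a + (\<Sum>i\<in>UNIV. \<Sum>j\<in>UNIV. B i j * ZZ t $i$j)" for t
    have hg: "h t = g (ZZ t)" for t using rep ZZ_in by (simp add: h_def)
    have dh: "(h has_real_derivative (0 + (\<Sum>i\<in>UNIV. \<Sum>j\<in>UNIV. B i j * DD$i$j))) (at 0)"
      unfolding h_def
      by (intro derivative_intros DERIV_cmult ZZ_deriv)
    have "0 + (\<Sum>i\<in>UNIV. \<Sum>j\<in>UNIV. B i j * DD$i$j) = 0"
    proof (rule DERIV_local_max[OF dh])
      show "(0::real) < 1" by simp
      show "\<forall>y. \<bar>0 - y\<bar> < 1 \<longrightarrow> h y \<le> h 0"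
        using gmax ZZ_in ZZ_0 hg by auto
    qed
    hence BD: "(\<Sum>i\<in>UNIV. \<Sum>j\<in>UNIV. B i j * DD$i$j) = 0" by simp
    have "g Y = a + (\<Sum>i\<in>UNIV. \<Sum>j\<in>UNIV. B i j * (mat 1 :: real^'n^'n)$i$j) + eps * (\<Sum>i\<in>UNIV. \<Sum>j\<in>UNIV. B i j * DD$i$j)"
      using rep YG by (simp add: Y_def algebra_simps sum.distrib sum_distrib_left)
    also have "\<dots> = g (mat 1)" using rep[rule_format, OF id_in] BD by simp
    finally show ?thesis .
  qed
  have "Y = mat 1"
    using v YG id_in agree unfolding vert_def by blast
  moreover have "Y $ p $ q \<noteq> (mat 1 :: real^'n^'n) $ p $ q"
  proof -
    have "\<bar>cc\<bar> < 1" using cb by (simp add: cc_def)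
    hence "cc * cc < 1" by (metis abs_mult_less abs_mult_self_eq abs_one mult_1_right)
    hence "cc * cc \<noteq> 1" by simp
    hence "DD $ p $ q \<noteq> 0" using pq G_diag[OF X, of q] by (simp add: DD_def cc_def)
    thus ?thesis using pq epos by (simp add: Y_def mat_def)
  qed
  ultimately show False by simp
qed

end

lemma vert_iff:
  fixes X :: "real^'n^'n"
  assumes X: "X \<in> elliptope"
  shows "vert X \<longleftrightarrow> X \<in> range cut_matrix"
proof
  assume "X \<in> range cut_matrix" thus "vert X" using cut_vert by auto
next
  assume v: "vert X"
  show "X \<in> range cut_matrix"
  proof (rule ccontr)
    assume nc: "X \<notin> range cut_matrix"
    then obtain p q where ne: "\<bar>X$p$q\<bar> \<noteq> 1" using pm_cut[OF X] by blast
    have pq: "p \<noteq> q" using ne G_diag[OF X] by auto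
    have "\<bar>X$p$q\<bar> < 1" using ne G_bound[OF X, of p q] by simp
    thus False using not_vert[OF X pq] v by simp
  qed
qed

lemma cut_pres:
  fixes \<tau> :: "real^'n^'n \<Rightarrow> real^'n^'n"
  assumes "bij_betw \<tau> elliptope elliptope" "affine_on elliptope \<tau>" "X \<in> range cut_matrix"
  shows "\<tau> X \<in> range cut_matrix"
proof -
  have XG: "X \<in> elliptope" using assms(3) cut_in by auto
  have "vert X" using vert_iff[OF XG] assms(3) by simp
  hence "vert (\<tau> X)" by (rule vert_transfer[OF assms(1,2) XG])
  moreover have "\<tau> X \<in> elliptope" using XG assms(1) by (auto simp: bij_betw_def)
  ultimately show ?thesis using vert_iff by blast
qed

definition Rrel :: "real^'n^'n \<Rightarrow> real^'n^'n \<Rightarrow> bool" where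
  "Rrel X Y \<longleftrightarrow> X \<noteq> ones_matrix \<and> Y \<noteq> ones_matrix \<and> X \<noteq> Y \<and>
     (\<exists>Z\<in>range cut_matrix. Z \<noteq> ones_matrix \<and> Z \<noteq> X \<and> Z \<noteq> Y \<and>
        (1/8) *\<^sub>R (3 *\<^sub>R (ones_matrix + X + Y) - Z) \<in> elliptope)"

lemma lin_solve:
  fixes a b c d z :: "'a::real_vector"
  assumes "(1 - 1/9) *\<^sub>R a + (1/9) *\<^sub>R z = (1/3) *\<^sub>R b + (1/3) *\<^sub>R c + (1/3) *\<^sub>R d"
  shows "a = (1/8) *\<^sub>R (3 *\<^sub>R (b + c + d) - z)"
proof -
  have "9 *\<^sub>R ((1 - 1/9) *\<^sub>R a + (1/9) *\<^sub>R z) = 9 *\<^sub>R ((1/3) *\<^sub>R b + (1/3) *\<^sub>R c + (1/3) *\<^sub>R d)"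
    using assms by simp
  hence "8 *\<^sub>R a + z = 3 *\<^sub>R (b + c + d)" by (simp add: scaleR_add_right)
  hence "8 *\<^sub>R a = 3 *\<^sub>R (b + c + d) - z" by (simp add: algebra_simps)
  hence "(1/8) *\<^sub>R (8 *\<^sub>R a) = (1/8) *\<^sub>R (3 *\<^sub>R (b + c + d) - z)" by simp
  thus ?thesis by simp
qed

lemma Rrel_transfer:
  fixes \<tau> :: "real^'n^'n \<Rightarrow> real^'n^'n"
  assumes bij: "bij_betw \<tau> elliptope elliptope" and aff: "affine_on elliptope \<tau>"
    and fix0: "\<tau> ones_matrix = ones_matrix"
    and X: "X \<in> range cut_matrix" and Y: "Y \<in> range cut_matrix" and R: "Rrel X Y"
  shows "Rrel (\<tau> X) (\<tau> Y)"
proof -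
  have XG: "X \<in> elliptope" and YG: "Y \<in> elliptope" using X Y cut_in by auto
  have OG: "ones_matrix \<in> elliptope" by (simp add: ones_cut cut_in)
  have inj: "inj_on \<tau> elliptope" using bij by (simp add: bij_betw_def)
  obtain Z where Z: "Z \<in> range cut_matrix" "Z \<noteq> ones_matrix" "Z \<noteq> X" "Z \<noteq> Y"
    and PG: "(1/8) *\<^sub>R (3 *\<^sub>R (ones_matrix + X + Y) - Z) \<in> elliptope"
    and ne: "X \<noteq> ones_matrix" "Y \<noteq> ones_matrix" "X \<noteq> Y"
    using R unfolding Rrel_def by blast
  have ZG: "Z \<in> elliptope" using Z(1) cut_in by auto
  define P where "P = (1/8) *\<^sub>R (3 *\<^sub>R (ones_matrix + X + Y) - Z)"
  have e: "(1 - 1/9) *\<^sub>R P + (1/9) *\<^sub>R Z = (1/3) *\<^sub>R ones_matrix + (1/3) *\<^sub>R X + (1/3) *\<^sub>R Y"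
    unfolding P_def by (simp add: algebra_simps)
  have "\<tau> ((1 - 1/9) *\<^sub>R P + (1/9) *\<^sub>R Z) = (1 - 1/9) *\<^sub>R \<tau> P + (1/9) *\<^sub>R \<tau> Z"
    by (rule affD[OF aff PG[folded P_def] ZG]) auto
  moreover have "\<tau> ((1/3) *\<^sub>R ones_matrix + (1/3) *\<^sub>R X + (1/3) *\<^sub>R Y)
      = (1/3) *\<^sub>R \<tau> ones_matrix + (1/3) *\<^sub>R \<tau> X + (1/3) *\<^sub>R \<tau> Y"
    by (rule aff3[OF aff G_convex OG XG YG])
  ultimately have "(1 - 1/9) *\<^sub>R \<tau> P + (1/9) *\<^sub>R \<tau> Z = (1/3) *\<^sub>R ones_matrix + (1/3) *\<^sub>R \<tau> X + (1/3) *\<^sub>R \<tau> Y"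
    using e fix0 by simp
  hence tP: "\<tau> P = (1/8) *\<^sub>R (3 *\<^sub>R (ones_matrix + \<tau> X + \<tau> Y) - \<tau> Z)" by (rule lin_solve)
  have "\<tau> P \<in> elliptope" using PG[folded P_def] bij by (auto simp: bij_betw_def)
  moreover have "\<tau> Z \<in> range cut_matrix" by (rule cut_pres[OF bij aff Z(1)])
  moreover have "\<tau> Z \<noteq> ones_matrix" "\<tau> Z \<noteq> \<tau> X" "\<tau> Z \<noteq> \<tau> Y"
    "\<tau> X \<noteq> ones_matrix" "\<tau> Y \<noteq> ones_matrix" "\<tau> X \<noteq> \<tau> Y"
    using inj Z ne XG YG ZG OG fix0 by (metis inj_on_def)+
  ultimately show ?thesis unfolding Rrel_def tP by blast
qed

lemma qf_add: fixes x :: "real^'n" shows "x \<bullet> ((A + B) *v x) = x \<bullet> (A *v x) + x \<bullet> (B *v x)"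
  by (simp add: matrix_vector_mult_add_rdistrib inner_add_right)
lemma qf_diff: fixes x :: "real^'n" shows "x \<bullet> ((A - B) *v x) = x \<bullet> (A *v x) - x \<bullet> (B *v x)"
  by (simp add: matrix_vector_mult_diff_rdistrib inner_diff_right)
lemma qf_scale: fixes x :: "real^'n" shows "x \<bullet> ((c *\<^sub>R A) *v x) = c * (x \<bullet> (A *v x))"
  by (simp add: smv)

lemma P_qf:
  fixes x :: "real^'n"
  shows "x \<bullet> (((1/8) *\<^sub>R (3 *\<^sub>R (ones_matrix + cut_matrix K + cut_matrix L) - cut_matrix M)) *v x)
    = (1/8) * (3 * ((sign_vec {} \<bullet> x)^2 + (sign_vec K \<bullet> x)^2 + (sign_vec L \<bullet> x)^2) - (sign_vec M \<bullet> x)^2)"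
  by (simp add: qf_add qf_diff qf_scale cut_qf ones_cut)

lemma sq3: "(u + v + w)^2 \<le> 3 * (u^2 + v^2 + w^2)" for u v w :: real
proof -
  have "0 \<le> (u - v)^2 + (v - w)^2 + (u - w)^2" by simp
  thus ?thesis by (simp add: power2_eq_square algebra_simps)
qed

lemma sq3e:
  fixes u v w e0 e1 e2 :: real
  assumes "e0 = 1 \<or> e0 = -1" "e1 = 1 \<or> e1 = -1" "e2 = 1 \<or> e2 = -1"
  shows "(e0 * u + e1 * v + e2 * w)^2 \<le> 3 * (u^2 + v^2 + w^2)"
proof -
  have "(e0 * u)^2 = u^2" "(e1 * v)^2 = v^2" "(e2 * w)^2 = w^2"
    using assms by (auto simp: power2_eq_square)
  thus ?thesis using sq3[of "e0 * u" "e1 * v" "e2 * w"] by simp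
qed

lemma cut_eq_iff: "cut_matrix K = cut_matrix L \<longleftrightarrow> (\<forall>i j. sign_vec K $ i * sign_vec K $ j = sign_vec L $ i * sign_vec L $ j)"
  by (simp add: vec_eq_iff)

lemma cut_compl: "cut_matrix (- K) = cut_matrix K"
  by (simp add: vec_eq_iff sign_vec_def)

definition noncross :: "'n set \<Rightarrow> 'n set \<Rightarrow> bool" where
  "noncross K L \<longleftrightarrow> K \<inter> L = {} \<or> K \<subseteq> L \<or> L \<subseteq> K \<or> K \<union> L = UNIV"

definition symd :: "'n set \<Rightarrow> 'n set \<Rightarrow> 'n set" where "symd K L = (K - L) \<union> (L - K)"

lemma sv_symd: "sign_vec (symd K L) $ i = sign_vec K $ i * sign_vec L $ i"
  by (auto simp: sign_vec_def symd_def)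

lemma R_noncross:
  fixes K L :: "'n::finite set"
  assumes n0K: "cut_matrix K \<noteq> ones_matrix" and n0L: "cut_matrix L \<noteq> ones_matrix"
    and nKL: "cut_matrix K \<noteq> cut_matrix L" and nc: "noncross K L"
  shows "Rrel (cut_matrix K) (cut_matrix L)"
proof -
  let ?a = "sign_vec K" and ?b = "sign_vec L" and ?o = "sign_vec ({}::'n set)"
  define M where "M = symd K L"
  have zM: "sign_vec M $ i = ?a $ i * ?b $ i" for i unfolding M_def by (rule sv_symd)
  have o1: "?o $ i = 1" for i by (simp add: sign_vec_def)
  have Z0: "cut_matrix M \<noteq> ones_matrix"
  proof
    assume "cut_matrix M = ones_matrix"
    hence eq: "\<forall>i j. sign_vec M $ i * sign_vec M $ j = ?o$i * ?o$j" by (metis ones_cut cut_eq_iff)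
    have h: "(?a$i * ?b$i) * (?a$j * ?b$j) = 1" for i j using eq o1 unfolding zM by simp
    have "?a$i * ?a$j = ?b$i * ?b$j" for i j
      using h[of i j] sv_cases[of K i] sv_cases[of K j] sv_cases[of L i] sv_cases[of L j] by auto
    thus False using nKL unfolding cut_eq_iff by blast
  qed
  have ZK: "cut_matrix M \<noteq> cut_matrix K"
  proof
    assume "cut_matrix M = cut_matrix K"
    hence eq: "\<forall>i j. sign_vec M $ i * sign_vec M $ j = sign_vec K $ i * sign_vec K $ j" by (metis cut_eq_iff)
    have h: "(?a$i * ?b$i) * (?a$j * ?b$j) = ?a$i * ?a$j" for i j using eq unfolding zM by blast
    have "?b$i * ?b$j = ?o$i * ?o$j" for i j
      using h[of i j] o1 sv_cases[of K i] sv_cases[of K j] sv_cases[of L i] sv_cases[of L j] by auto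
    thus False using n0L unfolding ones_cut cut_eq_iff by blast
  qed
  have ZL: "cut_matrix M \<noteq> cut_matrix L"
  proof
    assume "cut_matrix M = cut_matrix L"
    hence eq: "\<forall>i j. sign_vec M $ i * sign_vec M $ j = sign_vec L $ i * sign_vec L $ j" by (metis cut_eq_iff)
    have h: "(?a$i * ?b$i) * (?a$j * ?b$j) = ?b$i * ?b$j" for i j using eq unfolding zM by blast
    have "?a$i * ?a$j = ?o$i * ?o$j" for i j
      using h[of i j] o1 sv_cases[of K i] sv_cases[of K j] sv_cases[of L i] sv_cases[of L j] by auto
    thus False using n0K unfolding ones_cut cut_eq_iff by blast
  qed
  have rel: "\<exists>e0 e1 e2. (e0 = 1 \<or> e0 = -1) \<and> (e1 = 1 \<or> e1 = -1) \<and> (e2 = 1 \<or> e2 = -1) \<and>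
      sign_vec M = e0 *\<^sub>R ?o + e1 *\<^sub>R ?a + e2 *\<^sub>R ?b"
    using nc unfolding noncross_def
  proof (elim disjE)
    assume h: "K \<inter> L = {}"
    have "sign_vec M = (-1) *\<^sub>R ?o + 1 *\<^sub>R ?a + 1 *\<^sub>R ?b"
      using h by (auto simp: vec_eq_iff M_def symd_def sign_vec_def)
    thus ?thesis by blast
  next
    assume h: "K \<subseteq> L"
    have "sign_vec M = 1 *\<^sub>R ?o + (-1) *\<^sub>R ?a + 1 *\<^sub>R ?b"
      using h by (auto simp: vec_eq_iff M_def symd_def sign_vec_def)
    thus ?thesis by blast
  next
    assume h: "L \<subseteq> K"
    have "sign_vec M = 1 *\<^sub>R ?o + 1 *\<^sub>R ?a + (-1) *\<^sub>R ?b"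
      using h by (auto simp: vec_eq_iff M_def symd_def sign_vec_def)
    thus ?thesis by blast
  next
    assume h: "K \<union> L = UNIV"
    have "sign_vec M = (-1) *\<^sub>R ?o + (-1) *\<^sub>R ?a + (-1) *\<^sub>R ?b"
      using h by (auto simp: vec_eq_iff M_def symd_def sign_vec_def)
    thus ?thesis by blast
  qed
  then obtain e0 e1 e2 where e: "e0 = 1 \<or> e0 = -1" "e1 = 1 \<or> e1 = -1" "e2 = 1 \<or> e2 = -1"
    and zr: "sign_vec M = e0 *\<^sub>R ?o + e1 *\<^sub>R ?a + e2 *\<^sub>R ?b" by blast
  define P where "P = (1/8) *\<^sub>R (3 *\<^sub>R (ones_matrix + cut_matrix K + cut_matrix L) - cut_matrix M)"
  have PG: "P \<in> elliptope"
  proof -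
    have sym: "transpose P = P" by (simp add: P_def vec_eq_iff transpose_def ones_matrix_def mult.commute)
    have diag: "P $ i $ i = 1" for i by (simp add: P_def ones_matrix_def)
    have "0 \<le> x \<bullet> (P *v x)" for x
    proof -
      have "(sign_vec M \<bullet> x) = e0 * (?o \<bullet> x) + e1 * (?a \<bullet> x) + e2 * (?b \<bullet> x)"
        unfolding zr by (simp add: inner_add_left)
      hence "(sign_vec M \<bullet> x)^2 \<le> 3 * ((?o \<bullet> x)^2 + (?a \<bullet> x)^2 + (?b \<bullet> x)^2)"
        using sq3e[OF e] by simp
      thus ?thesis unfolding P_def P_qf by simp
    qed
    thus ?thesis using sym diag by (simp add: elliptope_def psd_matrix_def)
  qed
  show ?thesis unfolding Rrel_def
    using n0K n0L nKL Z0 ZK ZL PG unfolding P_def by blast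
qed

lemma R_cross:
  fixes K L :: "'n::finite set"
  assumes nc: "\<not> noncross K L"
  shows "\<not> Rrel (cut_matrix K) (cut_matrix L)"
proof
  assume R: "Rrel (cut_matrix K) (cut_matrix L)"
  then obtain M where ZO: "cut_matrix M \<noteq> ones_matrix" and ZK: "cut_matrix M \<noteq> cut_matrix K"
    and ZL: "cut_matrix M \<noteq> cut_matrix L"
    and PG: "(1/8) *\<^sub>R (3 *\<^sub>R (ones_matrix + cut_matrix K + cut_matrix L) - cut_matrix M) \<in> elliptope"
    unfolding Rrel_def by blast
  obtain r1 r2 r3 r4 where r1: "r1 \<in> K" "r1 \<in> L" and r2: "r2 \<in> K" "r2 \<notin> L"
    and r3: "r3 \<notin> K" "r3 \<in> L" and r4: "r4 \<notin> K" "r4 \<notin> L"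
    using nc unfolding noncross_def by blast
  let ?o = "sign_vec ({}::'n set)" and ?a = "sign_vec K" and ?b = "sign_vec L" and ?z = "sign_vec M"
  have ex: "\<exists>x::real^'n. ?o \<bullet> x = 0 \<and> ?a \<bullet> x = 0 \<and> ?b \<bullet> x = 0 \<and> ?z \<bullet> x \<noteq> 0"
  proof (cases "\<exists>i i'. (i \<in> K \<longleftrightarrow> i' \<in> K) \<and> (i \<in> L \<longleftrightarrow> i' \<in> L) \<and> \<not> (i \<in> M \<longleftrightarrow> i' \<in> M)")
    case True
    then obtain i i' where c: "(i \<in> K \<longleftrightarrow> i' \<in> K)" "(i \<in> L \<longleftrightarrow> i' \<in> L)" "\<not> (i \<in> M \<longleftrightarrow> i' \<in> M)"
      by blast
    have ii: "i \<noteq> i'" using c by blast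
    define x :: "real^'n" where "x = (\<chi> k. if k = i then 1 else if k = i' then -1 else 0)"
    have ip: "s \<bullet> x = s$i - s$i'" for s :: "real^'n"
    proof -
      have "s \<bullet> x = (\<Sum>k\<in>{i,i'}. s$k * x$k)" by (rule inner_supp) (auto simp: x_def)
      thus ?thesis using ii by (simp add: x_def)
    qed
    show ?thesis
      by (rule exI[of _ x]) (use c in \<open>auto simp: ip sign_vec_def\<close>)
  next
    case False
    hence cls: "(i \<in> M \<longleftrightarrow> i' \<in> M)" if "(i \<in> K \<longleftrightarrow> i' \<in> K)" "(i \<in> L \<longleftrightarrow> i' \<in> L)" for i i'
      using that by blast
    have d: "r1 \<noteq> r2" "r1 \<noteq> r3" "r1 \<noteq> r4" "r2 \<noteq> r3" "r2 \<noteq> r4" "r3 \<noteq> r4"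
      using r1 r2 r3 r4 by auto
    define x :: "real^'n" where "x = (\<chi> k. if k = r1 then 1 else if k = r2 then -1 else if k = r3 then -1 else if k = r4 then 1 else 0)"
    have ip: "s \<bullet> x = s$r1 - s$r2 - s$r3 + s$r4" for s :: "real^'n"
    proof -
      have "s \<bullet> x = (\<Sum>k\<in>{r1,r2,r3,r4}. s$k * x$k)" by (rule inner_supp) (auto simp: x_def)
      thus ?thesis using d by (simp add: x_def)
    qed
    have z0: "?z \<bullet> x \<noteq> 0"
    proof
      assume "?z \<bullet> x = 0"
      hence dz: "?z$r1 - ?z$r2 - ?z$r3 + ?z$r4 = 0" by (simp add: ip)
      have pat: "((r1 \<in> M) = (r2 \<in> M) \<and> (r2 \<in> M) = (r3 \<in> M) \<and> (r3 \<in> M) = (r4 \<in> M)) \<or>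
                 ((r1 \<in> M) = (r2 \<in> M) \<and> (r3 \<in> M) = (r4 \<in> M) \<and> (r1 \<in> M) \<noteq> (r3 \<in> M)) \<or>
                 ((r1 \<in> M) = (r3 \<in> M) \<and> (r2 \<in> M) = (r4 \<in> M) \<and> (r1 \<in> M) \<noteq> (r2 \<in> M))"
        using dz by (cases "r1 \<in> M"; cases "r2 \<in> M"; cases "r3 \<in> M"; cases "r4 \<in> M") (simp_all add: sign_vec_def)
      have mem: "(i \<in> M) = (if i \<in> K then if i \<in> L then r1 \<in> M else r2 \<in> M else if i \<in> L then r3 \<in> M else r4 \<in> M)" for i
      proof (cases "i \<in> K"; cases "i \<in> L")
        assume "i \<in> K" "i \<in> L" thus ?thesis using cls[of i r1] r1 by simp
      next
        assume "i \<in> K" "i \<notin> L" thus ?thesis using cls[of i r2] r2 by simp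
      next
        assume "i \<notin> K" "i \<in> L" thus ?thesis using cls[of i r3] r3 by simp
      next
        assume "i \<notin> K" "i \<notin> L" thus ?thesis using cls[of i r4] r4 by simp
      qed
      from pat show False
      proof (elim disjE)
        assume h: "(r1 \<in> M) = (r2 \<in> M) \<and> (r2 \<in> M) = (r3 \<in> M) \<and> (r3 \<in> M) = (r4 \<in> M)"
        show False
        proof (cases "r4 \<in> M")
          case True
          have "M = - {}"
          proof (rule set_eqI)
            fix i show "i \<in> M \<longleftrightarrow> i \<in> - {}" using mem[of i] h \<open>r4 \<in> M\<close> by (auto split: if_splits)
          qed
          thus False using ZO by (simp only: cut_compl ones_cut)
        next
          case False
          have "M = {}"
          proof (rule set_eqI)
            fix i show "i \<in> M \<longleftrightarrow> i \<in> {}" using mem[of i] h \<open>r4 \<notin> M\<close> by (auto split: if_splits)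
          qed
          thus False using ZO by (simp add: ones_cut)
        qed
      next
        assume h: "(r1 \<in> M) = (r2 \<in> M) \<and> (r3 \<in> M) = (r4 \<in> M) \<and> (r1 \<in> M) \<noteq> (r3 \<in> M)"
        show False
        proof (cases "r1 \<in> M")
          case True
          have "M = K"
          proof (rule set_eqI)
            fix i show "i \<in> M \<longleftrightarrow> i \<in> K" using mem[of i] h \<open>r1 \<in> M\<close> by (auto split: if_splits)
          qed
          thus False using ZK by simp
        next
          case False
          have "M = - K"
          proof (rule set_eqI)
            fix i show "i \<in> M \<longleftrightarrow> i \<in> - K" using mem[of i] h \<open>r1 \<notin> M\<close> by (auto split: if_splits)
          qed
          thus False using ZK by (simp only: cut_compl)
        qed
      next
        assume h: "(r1 \<in> M) = (r3 \<in> M) \<and> (r2 \<in> M) = (r4 \<in> M) \<and> (r1 \<in> M) \<noteq> (r2 \<in> M)"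
        show False
        proof (cases "r1 \<in> M")
          case True
          have "M = L"
          proof (rule set_eqI)
            fix i show "i \<in> M \<longleftrightarrow> i \<in> L" using mem[of i] h \<open>r1 \<in> M\<close> by (auto split: if_splits)
          qed
          thus False using ZL by simp
        next
          case False
          have "M = - L"
          proof (rule set_eqI)
            fix i show "i \<in> M \<longleftrightarrow> i \<in> - L" using mem[of i] h \<open>r1 \<notin> M\<close> by (auto split: if_splits)
          qed
          thus False using ZL by (simp only: cut_compl)
        qed
      qed
    qed
    show ?thesis
      by (rule exI[of _ x]) (use r1 r2 r3 r4 z0 in \<open>auto simp: ip sign_vec_def\<close>)
  qed
  then obtain x :: "real^'n" where h: "?o \<bullet> x = 0" "?a \<bullet> x = 0" "?b \<bullet> x = 0" "?z \<bullet> x \<noteq> 0" by blast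
  have "x \<bullet> (((1/8) *\<^sub>R (3 *\<^sub>R (ones_matrix + cut_matrix K + cut_matrix L) - cut_matrix M)) *v x) < 0"
    unfolding P_qf using h by simp
  thus False using G_psd[OF PG, of x] by simp
qed

lemma cut_inj:
  fixes L L' :: "'n::finite set"
  assumes "i0 \<notin> L" "i0 \<notin> L'" "cut_matrix L = cut_matrix L'"
  shows "L = L'"
proof -
  have "sign_vec L $ i0 * sign_vec L $ j = sign_vec L' $ i0 * sign_vec L' $ j" for j
    using assms(3) by (metis cut_entry)
  hence "sign_vec L $ j = sign_vec L' $ j" for j using assms(1,2) by (simp add: sign_vec_def)
  thus ?thesis by (auto simp: sign_vec_def split: if_splits) (metis one_neq_neg_one)+
qed

lemma card_compl: fixes A :: "'n::finite set" shows "card (- A) = CARD('n) - card A"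
  by (simp add: Compl_eq_Diff_UNIV card_Diff_subset)

lemma count_sets:
  fixes K :: "'n::finite set"
  assumes i0: "i0 \<notin> K" and K0: "K \<noteq> {}"
  shows "card {L. i0 \<notin> L \<and> L \<noteq> {} \<and> L \<noteq> K \<and> (K \<inter> L = {} \<or> K \<subseteq> L \<or> L \<subseteq> K)} + 4
         = 2^(CARD('n) - card K) + 2^(card K)"
proof -
  define U where "U = - {i0}"
  define T1 where "T1 = Pow (U - K) - {{}}"
  define T2 where "T2 = (\<lambda>A. K \<union> A) ` Pow (U - K) - {K}"
  define T3 where "T3 = Pow K - {{}, K}"
  have KU: "K \<subseteq> U" using i0 by (auto simp: U_def)
  have eq: "{L. i0 \<notin> L \<and> L \<noteq> {} \<and> L \<noteq> K \<and> (K \<inter> L = {} \<or> K \<subseteq> L \<or> L \<subseteq> K)} = T1 \<union> T2 \<union> T3"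
  proof (rule set_eqI, rule iffI)
    fix L assume "L \<in> {L. i0 \<notin> L \<and> L \<noteq> {} \<and> L \<noteq> K \<and> (K \<inter> L = {} \<or> K \<subseteq> L \<or> L \<subseteq> K)}"
    hence L: "i0 \<notin> L" "L \<noteq> {}" "L \<noteq> K" "K \<inter> L = {} \<or> K \<subseteq> L \<or> L \<subseteq> K" by auto
    from L(4) show "L \<in> T1 \<union> T2 \<union> T3"
    proof (elim disjE)
      assume "K \<inter> L = {}" thus ?thesis using L by (auto simp: T1_def U_def)
    next
      assume h: "K \<subseteq> L"
      have "L = K \<union> (L - K)" using h by auto
      moreover have "L - K \<in> Pow (U - K)" using L by (auto simp: U_def)
      ultimately have "L \<in> (\<lambda>A. K \<union> A) ` Pow (U - K)" by blast
      thus ?thesis using L by (auto simp: T2_def)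
    next
      assume "L \<subseteq> K" thus ?thesis using L by (auto simp: T3_def)
    qed
  next
    fix L assume "L \<in> T1 \<union> T2 \<union> T3"
    thus "L \<in> {L. i0 \<notin> L \<and> L \<noteq> {} \<and> L \<noteq> K \<and> (K \<inter> L = {} \<or> K \<subseteq> L \<or> L \<subseteq> K)}"
      using i0 K0 by (auto simp: T1_def T2_def T3_def U_def)
  qed
  have fin: "finite T1" "finite T2" "finite T3" by (auto simp: T1_def T2_def T3_def)
  have d12: "T1 \<inter> T2 = {}" using K0 by (auto simp: T1_def T2_def)
  have d3: "(T1 \<union> T2) \<inter> T3 = {}" by (auto simp: T1_def T2_def T3_def)
  let ?m = "card (U - K)"
  have cUK: "?m = CARD('n) - 1 - card K"
  proof -
    have "card U = CARD('n) - 1" by (simp add: U_def card_compl)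
    thus ?thesis using KU by (simp add: card_Diff_subset)
  qed
  have c1: "card T1 = 2^?m - 1" by (simp add: T1_def card_Pow)
  have inj: "inj_on (\<lambda>A. K \<union> A) (Pow (U - K))" by (auto simp: inj_on_def)
  have c2: "card T2 = 2^?m - 1"
  proof -
    have "K \<in> (\<lambda>A. K \<union> A) ` Pow (U - K)" by (rule image_eqI[of _ _ "{}"]) auto
    hence "card T2 = card ((\<lambda>A. K \<union> A) ` Pow (U - K)) - 1" by (simp add: T2_def)
    thus ?thesis using card_image[OF inj] by (simp add: card_Pow)
  qed
  have c3: "card T3 = 2^(card K) - 2"
  proof -
    have "card {{}, K} = 2" using K0 by simp
    moreover have "{{}, K} \<subseteq> Pow K" by auto
    ultimately show ?thesis unfolding T3_def by (simp add: card_Diff_subset card_Pow)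
  qed
  have kpos: "card K \<ge> 1" using K0 by (simp add: Suc_le_eq card_gt_0_iff)
  have kN: "card K \<le> CARD('n) - 1"
  proof -
    have "card K \<le> card U" using KU by (simp add: card_mono)
    thus ?thesis by (simp add: U_def card_compl)
  qed
  have p1: "2^?m \<ge> (1::nat)" by simp
  have p2: "2^(card K) \<ge> (2::nat)" using kpos by (metis power_one_right power_increasing_iff one_less_numeral_iff semiring_norm(76))
  have pw: "(2::nat)^(CARD('n) - card K) = 2 * 2^?m"
  proof -
    have "CARD('n) - card K = Suc ?m" using kN kpos cUK by simp
    thus ?thesis by simp
  qed
  have "card (T1 \<union> T2 \<union> T3) = card T1 + card T2 + card T3"
    using fin d12 d3 by (simp add: card_Un_disjoint)
  moreover have "card T1 + card T2 + card T3 + 4 = 2 * 2^?m + 2^card K"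
    unfolding c1 c2 c3 using p1 p2 by arith
  ultimately show ?thesis unfolding eq pw by simp
qed

definition cnt :: "real^'n^'n \<Rightarrow> nat" where
  "cnt X = card {Y \<in> range cut_matrix. Rrel X Y}"

lemma cnt_formula:
  fixes K :: "'n::finite set"
  assumes i0: "i0 \<notin> K" and K0: "K \<noteq> {}"
  shows "cnt (cut_matrix K) + 4 = 2^(CARD('n) - card K) + 2^(card K)"
proof -
  let ?F = "{L::'n set. i0 \<notin> L}"
  let ?T = "{L. i0 \<notin> L \<and> L \<noteq> {} \<and> L \<noteq> K \<and> (K \<inter> L = {} \<or> K \<subseteq> L \<or> L \<subseteq> K)}"
  have injF: "inj_on cut_matrix ?F" unfolding inj_on_def using cut_inj[of i0] by blast
  have rng: "range cut_matrix = cut_matrix ` ?F"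
  proof
    show "range cut_matrix \<subseteq> cut_matrix ` ?F"
    proof
      fix Y :: "real^'n^'n" assume "Y \<in> range cut_matrix"
      then obtain L where Y: "Y = cut_matrix L" by blast
      show "Y \<in> cut_matrix ` ?F"
      proof (cases "i0 \<in> L")
        case True thus ?thesis using Y cut_compl[of L] by (metis (mono_tags, lifting) ComplD image_eqI mem_Collect_eq)
      next
        case False thus ?thesis using Y by blast
      qed
    qed
  qed auto
  have KF: "K \<in> ?F" using i0 by simp
  have eF: "{} \<in> ?F" by simp
  have rel: "Rrel (cut_matrix K) (cut_matrix L) \<longleftrightarrow> L \<in> ?T" if LF: "L \<in> ?F" for L
  proof
    assume R: "Rrel (cut_matrix K) (cut_matrix L)"
    hence "cut_matrix L \<noteq> cut_matrix {}" "cut_matrix K \<noteq> cut_matrix L"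
      unfolding Rrel_def ones_cut by auto
    hence "L \<noteq> {}" "L \<noteq> K" by auto
    moreover have "noncross K L" using R_cross R by blast
    hence "K \<inter> L = {} \<or> K \<subseteq> L \<or> L \<subseteq> K" using i0 LF unfolding noncross_def by auto
    ultimately show "L \<in> ?T" using LF by simp
  next
    assume T: "L \<in> ?T"
    have "cut_matrix K \<noteq> ones_matrix" unfolding ones_cut using cut_inj[OF i0, of "{}"] K0 by auto
    moreover have "cut_matrix L \<noteq> ones_matrix" unfolding ones_cut using cut_inj[of i0 L "{}"] T by auto
    moreover have "cut_matrix K \<noteq> cut_matrix L" using cut_inj[OF i0, of L] T by auto
    moreover have "noncross K L" using T unfolding noncross_def by auto
    ultimately show "Rrel (cut_matrix K) (cut_matrix L)" by (rule R_noncross)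
  qed
  have "{Y \<in> range cut_matrix. Rrel (cut_matrix K) Y} = cut_matrix ` ?T"
  proof
    show "{Y \<in> range cut_matrix. Rrel (cut_matrix K) Y} \<subseteq> cut_matrix ` ?T"
    proof
      fix Y :: "real^'n^'n" assume Y: "Y \<in> {Y \<in> range cut_matrix. Rrel (cut_matrix K) Y}"
      then obtain L where L: "L \<in> ?F" "Y = cut_matrix L" using rng by auto
      thus "Y \<in> cut_matrix ` ?T" using rel[OF L(1)] Y by blast
    qed
    show "cut_matrix ` ?T \<subseteq> {Y \<in> range cut_matrix. Rrel (cut_matrix K) Y}"
      using rel by auto
  qed
  moreover have "card (cut_matrix ` ?T) = card ?T"
    by (rule card_image) (rule inj_on_subset[OF injF], auto)
  ultimately have "cnt (cut_matrix K) = card ?T" unfolding cnt_def by simp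
  thus ?thesis using count_sets[OF i0 K0] by simp
qed

lemma cnt_mono:
  fixes \<tau> :: "real^'n^'n \<Rightarrow> real^'n^'n"
  assumes bij: "bij_betw \<tau> elliptope elliptope" and aff: "affine_on elliptope \<tau>"
    and fix0: "\<tau> ones_matrix = ones_matrix" and X: "X \<in> range cut_matrix"
  shows "cnt X \<le> cnt (\<tau> X)"
proof -
  have sub: "\<tau> ` {Y \<in> range cut_matrix. Rrel X Y} \<subseteq> {Y \<in> range cut_matrix. Rrel (\<tau> X) Y}"
    using cut_pres[OF bij aff] Rrel_transfer[OF bij aff fix0 X] by auto
  have inj: "inj_on \<tau> {Y \<in> range cut_matrix. Rrel X Y}"
    by (rule inj_on_subset[of _ elliptope]) (use bij cut_in in \<open>auto simp: bij_betw_def\<close>)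
  have fin: "finite {Y \<in> range cut_matrix. Rrel (\<tau> X) Y}" by simp
  show ?thesis unfolding cnt_def by (rule card_inj_on_le[OF inj sub fin])
qed

lemma inv_props:
  fixes \<tau> :: "real^'n^'n \<Rightarrow> real^'n^'n"
  assumes bij: "bij_betw \<tau> elliptope elliptope" and aff: "affine_on elliptope \<tau>"
    and fix0: "\<tau> ones_matrix = ones_matrix"
  shows "bij_betw (inv_into elliptope \<tau>) elliptope elliptope"
    "affine_on elliptope (inv_into elliptope \<tau>)"
    "inv_into elliptope \<tau> ones_matrix = ones_matrix"
    "\<And>X. X \<in> elliptope \<Longrightarrow> inv_into elliptope \<tau> (\<tau> X) = X"
    "\<And>X. X \<in> elliptope \<Longrightarrow> \<tau> (inv_into elliptope \<tau> X) = X"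
proof -
  show "bij_betw (inv_into elliptope \<tau>) elliptope elliptope" by (rule bij_betw_inv_into[OF bij])
  show "affine_on elliptope (inv_into elliptope \<tau>)" by (rule aff_inv[OF bij aff G_convex])
  have OG: "ones_matrix \<in> elliptope" by (simp add: ones_cut cut_in)
  show "inv_into elliptope \<tau> ones_matrix = ones_matrix"
    using inv_into_f_f[OF _ OG, of \<tau>] bij fix0 by (simp add: bij_betw_def)
  show "\<And>X. X \<in> elliptope \<Longrightarrow> inv_into elliptope \<tau> (\<tau> X) = X"
    using bij by (simp add: bij_betw_def)
  show "\<And>X. X \<in> elliptope \<Longrightarrow> \<tau> (inv_into elliptope \<tau> X) = X"
    using bij by (simp add: bij_betw_def f_inv_into_f)
qed

lemma cnt_eq:
  fixes \<tau> :: "real^'n^'n \<Rightarrow> real^'n^'n"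
  assumes bij: "bij_betw \<tau> elliptope elliptope" and aff: "affine_on elliptope \<tau>"
    and fix0: "\<tau> ones_matrix = ones_matrix" and X: "X \<in> range cut_matrix"
  shows "cnt (\<tau> X) = cnt X"
proof -
  note ip = inv_props[OF bij aff fix0]
  have XG: "X \<in> elliptope" using X cut_in by auto
  have "cnt (\<tau> X) \<le> cnt (inv_into elliptope \<tau> (\<tau> X))"
    by (rule cnt_mono[OF ip(1,2,3) cut_pres[OF bij aff X]])
  thus ?thesis using cnt_mono[OF bij aff fix0 X] ip(4)[OF XG] by simp
qed

lemma f_strict:
  fixes a b N :: nat
  assumes "a < b" "2 * b \<le> N"
  shows "2^(N - b) + 2^b < (2::nat)^(N - a) + 2^a"
proof -
  define P :: nat where "P = 2^a"
  define Q :: nat where "Q = 2^(N - b)"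
  define D :: nat where "D = 2^(b - a)"
  have PQ: "P < Q" unfolding P_def Q_def using assms by (intro power_strict_increasing) auto
  have "(2::nat)^1 \<le> 2^(b - a)" by (rule power_increasing) (use assms in auto)
  hence D2: "2 \<le> D" unfolding D_def by simp
  have e1: "2^b = P * D" unfolding P_def D_def using assms by (simp add: power_add[symmetric])
  have e2: "2^(N - a) = Q * D" unfolding Q_def D_def using assms by (simp add: power_add[symmetric])
  have "(Q - P) * 2 \<le> (Q - P) * D" using D2 by simp
  moreover have "Q * D = P * D + (Q - P) * D" using PQ by (simp add: diff_mult_distrib)
  moreover have "2^(N - b) = Q" "2^a = P" by (simp_all add: P_def Q_def)
  ultimately show ?thesis unfolding e1 e2 using PQ by linarith
qed

lemma f_inj:
  fixes a b N :: nat
  assumes "2 * a \<le> N" "2 * b \<le> N" "2^(N - b) + 2^b = (2::nat)^(N - a) + 2^a"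
  shows "a = b"
proof (rule ccontr)
  assume "a \<noteq> b"
  hence "a < b \<or> b < a" by arith
  thus False
  proof
    assume "a < b" thus False using f_strict[of a b N] assms by simp
  next
    assume "b < a" thus False using f_strict[of b a N] assms by simp
  qed
qed

lemma normalize_i0:
  fixes K :: "'n::finite set"
  shows "\<exists>K'. i0 \<notin> K' \<and> cut_matrix K' = cut_matrix K \<and> (card K' = card K \<or> card K' = CARD('n) - card K)"
proof (cases "i0 \<in> K")
  case True thus ?thesis using cut_compl[of K] card_compl[of K] by (intro exI[of _ "- K"]) auto
next
  case False thus ?thesis by blast
qed

lemma class_pres:
  fixes \<tau> :: "real^'n^'n \<Rightarrow> real^'n^'n"
  assumes bij: "bij_betw \<tau> elliptope elliptope" and aff: "affine_on elliptope \<tau>"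
    and fix0: "\<tau> ones_matrix = ones_matrix"
    and k1: "1 \<le> k" and k2: "k \<le> CARD('n) div 2" and X: "X \<in> cut_class k"
  shows "\<tau> X \<in> cut_class k"
proof -
  let ?N = "CARD('n)"
  obtain i0 :: 'n where True by simp
  obtain K where K: "X = cut_matrix K" "card K = k" using X by (auto simp: cut_class_def)
  obtain K' where K': "i0 \<notin> K'" "cut_matrix K' = X" "card K' = k \<or> card K' = ?N - k"
    using normalize_i0[of i0 K] K by auto
  have K'0: "K' \<noteq> {}" using K'(3) k1 k2 by auto
  have XR: "X \<in> range cut_matrix" using K by simp
  have XG: "X \<in> elliptope" using XR cut_in by auto
  obtain L where L: "\<tau> X = cut_matrix L" using cut_pres[OF bij aff XR] by auto
  obtain L' where L': "i0 \<notin> L'" "cut_matrix L' = \<tau> X" "card L' = card L \<or> card L' = ?N - card L"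
    using normalize_i0[of i0 L] L by auto
  have L'0: "L' \<noteq> {}"
  proof
    assume "L' = {}"
    hence "\<tau> X = \<tau> ones_matrix" using L' fix0 by (simp add: ones_cut)
    moreover have "inj_on \<tau> elliptope" using bij by (simp add: bij_betw_def)
    moreover have "ones_matrix \<in> elliptope" by (simp add: ones_cut cut_in)
    ultimately have "X = ones_matrix" using XG by (metis inj_onD)
    hence "K' = {}" using cut_inj[OF K'(1), of "{}"] K'(2) by (simp add: ones_cut)
    thus False using K'0 by simp
  qed
  have "cnt (\<tau> X) = cnt X" by (rule cnt_eq[OF bij aff fix0 XR])
  hence "cnt (cut_matrix L') + 4 = cnt (cut_matrix K') + 4" using K'(2) L'(2) by simp
  hence eq: "2^(?N - card L') + 2^(card L') = (2::nat)^(?N - card K') + 2^(card K')"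
    unfolding cnt_formula[OF L'(1) L'0] cnt_formula[OF K'(1) K'0] .
  have cL: "card L' \<le> ?N" by (rule card_mono) auto
  have cK: "card K' \<le> ?N" by (rule card_mono) auto
  have kN: "k \<le> ?N" using k2 by simp
  have fk: "(2::nat)^(?N - card K') + 2^(card K') = 2^(?N - k) + 2^k"
  proof (cases "card K' = k")
    case True thus ?thesis by simp
  next
    case False
    hence "card K' = ?N - k" using K'(3) by simp
    moreover have "?N - (?N - k) = k" using kN by simp
    ultimately show ?thesis by (simp add: add.commute)
  qed
  define l where "l = min (card L') (?N - card L')"
  have fl: "(2::nat)^(?N - card L') + 2^(card L') = 2^(?N - l) + 2^l"
  proof (cases "card L' \<le> ?N - card L'")
    case True thus ?thesis by (simp add: l_def min_def)
  next
    case False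
    hence "l = ?N - card L'" by (simp add: l_def min_def)
    moreover have "?N - (?N - card L') = card L'" using cL by simp
    ultimately show ?thesis by (simp add: add.commute)
  qed
  have "2 * l \<le> ?N" unfolding l_def by auto
  moreover have "2 * k \<le> ?N" using k2 by auto
  ultimately have "l = k" using f_inj[of l ?N k] eq fk fl by simp
  hence "card L' = k \<or> card (- L') = k"
  proof (cases "card L' \<le> ?N - card L'")
    case True thus ?thesis using \<open>l = k\<close> by (simp add: l_def min_def)
  next
    case False thus ?thesis using \<open>l = k\<close> by (simp add: l_def min_def card_compl)
  qed
  moreover have "cut_matrix (- L') = \<tau> X" by (simp only: cut_compl L'(2))
  ultimately show ?thesis
  proof (elim disjE)
    assume "card L' = k" thus ?thesis using L'(2) unfolding cut_class_def
      by (intro CollectI exI[of _ L'] conjI) auto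
  next
    assume "card (- L') = k" "cut_matrix (- L') = \<tau> X"
    thus ?thesis unfolding cut_class_def by (intro CollectI exI[of _ "- L'"] conjI) auto
  qed
qed

theorem lemma11:
  fixes \<sigma> :: "real^'n^'n \<Rightarrow> real^'n^'n"
  assumes "bij_betw \<sigma> elliptope elliptope"
    and "affine_on elliptope \<sigma>"
    and "\<sigma> ones_matrix = ones_matrix"
    and "1 \<le> k" and "k \<le> CARD('n) div 2"
  shows "\<sigma> ` cut_class k = cut_class k"
proof
  show "\<sigma> ` cut_class k \<subseteq> cut_class k"
  proof
    fix Y assume "Y \<in> \<sigma> ` cut_class k"
    then obtain X where "X \<in> cut_class k" "Y = \<sigma> X" by blast
    thus "Y \<in> cut_class k" using class_pres[OF assms] by simp
  qed
  show "cut_class k \<subseteq> \<sigma> ` cut_class k"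
  proof
    fix X :: "real^'n^'n" assume X: "X \<in> cut_class k"
    note ip = inv_props[OF assms(1,2,3)]
    have XG: "X \<in> elliptope" using X cut_in by (auto simp: cut_class_def)
    have m: "inv_into elliptope \<sigma> X \<in> cut_class k"
      by (rule class_pres[OF ip(1,2,3) assms(4,5) X])
    have e: "\<sigma> (inv_into elliptope \<sigma> X) = X" by (rule ip(5)[OF XG])
    show "X \<in> \<sigma> ` cut_class k" using image_eqI[where f=\<sigma>, OF e[symmetric] m] .
  qed
qed

end
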